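(* Let $f:(L_1,[\cdot,\cdot]_1,\alpha_1)\to(L_2,[\cdot,\cdot]_2,\alpha_2)$ be a surjective morphism of Hom-Lie algebras over a field $F$. If $\mu_A$ is a fuzzy Hom-Lie subalgebra of $L_1$, then the fuzzy set $\mu_{f(A)}$ on $L_2$, defined by $\mu_{f(A)}(y)=\sup_{x\in f^{-1}(y)}\mu_A(x)$ for $y\in f(L_1)$ and $\mu_{f(A)}(y)=0$ otherwise, is a fuzzy Hom-Lie subalgebra of $L_2$.
   Context: A Hom-Lie algebra over $F$ is a triple $(L,[\cdot,\cdot],\alpha)$ with $L$ an $F$-vector space, $\alpha:L\to L$ linear and $[\cdot,\cdot]$ bilinear, skew-symmetric, satisfying $[\alpha(x),[y,z]]+[\alpha(y),[z,x]]+[\alpha(z),[x,y]]=0$. A morphism of Hom-Lie algebras is a linear map $f$ with $f([x,y]_1)=[f(x),f(y)]_2$ and $f\circ\alpha_1=\alpha_2\circ f$. A fuzzy subset $\mu:L\to[0,1]$ is a fuzzy Hom-Lie subalgebra if for all $x,y\in L$, $c\in F$: $\mu(x+y)\ge\min\{\mu(x),\mu(y)\}$, $\mu(cx)\ge\mu(x)$, $\mu([x,y])\ge\min\{\mu(x),\mu(y)\}$, $\mu(\alpha(x))\ge\mu(x)$. *)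

theory Defs
  imports Complex_Main
begin

definition hom_lie_algebra ::
  "('k::field \<Rightarrow> 'v::ab_group_add \<Rightarrow> 'v) \<Rightarrow> ('v \<Rightarrow> 'v \<Rightarrow> 'v) \<Rightarrow> ('v \<Rightarrow> 'v) \<Rightarrow> bool" where
  "hom_lie_algebra sc br \<alpha> \<longleftrightarrow>
     vector_space sc \<and>
     Vector_Spaces.linear sc sc \<alpha> \<and>
     (\<forall>x. Vector_Spaces.linear sc sc (br x)) \<and>
     (\<forall>y. Vector_Spaces.linear sc sc (\<lambda>x. br x y)) \<and>
     (\<forall>x y. br x y = - br y x) \<and>
     (\<forall>x y z. br (\<alpha> x) (br y z) + br (\<alpha> y) (br z x) + br (\<alpha> z) (br x y) = 0)"

definition hom_lie_morphism ::
  "('k::field \<Rightarrow> 'v::ab_group_add \<Rightarrow> 'v) \<Rightarrow> ('v \<Rightarrow> 'v \<Rightarrow> 'v) \<Rightarrow> ('v \<Rightarrow> 'v) \<Rightarrow>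
   ('k \<Rightarrow> 'w::ab_group_add \<Rightarrow> 'w) \<Rightarrow> ('w \<Rightarrow> 'w \<Rightarrow> 'w) \<Rightarrow> ('w \<Rightarrow> 'w) \<Rightarrow>
   ('v \<Rightarrow> 'w) \<Rightarrow> bool" where
  "hom_lie_morphism sc1 br1 \<alpha>1 sc2 br2 \<alpha>2 f \<longleftrightarrow>
     Vector_Spaces.linear sc1 sc2 f \<and>
     (\<forall>x y. f (br1 x y) = br2 (f x) (f y)) \<and>
     f \<circ> \<alpha>1 = \<alpha>2 \<circ> f"

definition fuzzy_hom_lie_subalgebra ::
  "('k::field \<Rightarrow> 'v::ab_group_add \<Rightarrow> 'v) \<Rightarrow> ('v \<Rightarrow> 'v \<Rightarrow> 'v) \<Rightarrow> ('v \<Rightarrow> 'v) \<Rightarrow> ('v \<Rightarrow> real) \<Rightarrow> bool" where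
  "fuzzy_hom_lie_subalgebra sc br \<alpha> \<mu> \<longleftrightarrow>
     (\<forall>x. 0 \<le> \<mu> x \<and> \<mu> x \<le> 1) \<and>
     (\<forall>x y. \<mu> (x + y) \<ge> min (\<mu> x) (\<mu> y)) \<and>
     (\<forall>c x. \<mu> (sc c x) \<ge> \<mu> x) \<and>
     (\<forall>x y. \<mu> (br x y) \<ge> min (\<mu> x) (\<mu> y)) \<and>
     (\<forall>x. \<mu> (\<alpha> x) \<ge> \<mu> x)"

definition fuzzy_image :: "('v \<Rightarrow> 'w) \<Rightarrow> ('v \<Rightarrow> real) \<Rightarrow> 'w \<Rightarrow> real" where
  "fuzzy_image f \<mu> y = (if y \<in> range f then (SUP x\<in>{x. f x = y}. \<mu> x) else 0)"

end

theory Submission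
  imports Defs
begin

lemma img_le1:
  fixes \<mu> :: "'v \<Rightarrow> real"
  assumes bd: "\<And>x. 0 \<le> \<mu> x \<and> \<mu> x \<le> 1" and s: "surj f"
    and h: "\<And>x. f x = y \<Longrightarrow> \<mu> x \<le> \<mu> (g x) \<and> f (g x) = y'"
  shows "(SUP x\<in>{x. f x = y}. \<mu> x) \<le> (SUP x\<in>{x. f x = y'}. \<mu> x)"
proof -
  have ne: "{x. f x = y} \<noteq> {}" using s by (metis (mono_tags) empty_Collect_eq surj_def)
  have bdd: "bdd_above (\<mu> ` {x. f x = y'})" using bd by (intro bdd_aboveI[of _ 1]) auto
  show ?thesis
  proof (rule cSUP_least[OF ne])
    fix x assume "x \<in> {x. f x = y}"
    then have "\<mu> x \<le> \<mu> (g x)" "g x \<in> {x. f x = y'}" using h by auto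
    then show "\<mu> x \<le> (SUP x\<in>{x. f x = y'}. \<mu> x)"
      using cSUP_upper[OF _ bdd] by (meson order_trans)
  qed
qed

lemma img_le2:
  fixes \<mu> :: "'v \<Rightarrow> real"
  assumes bd: "\<And>x. 0 \<le> \<mu> x \<and> \<mu> x \<le> 1" and s: "surj f"
    and h: "\<And>x1 x2. f x1 = y1 \<Longrightarrow> f x2 = y2 \<Longrightarrow> min (\<mu> x1) (\<mu> x2) \<le> \<mu> (g x1 x2) \<and> f (g x1 x2) = y'"
  shows "min (SUP x\<in>{x. f x = y1}. \<mu> x) (SUP x\<in>{x. f x = y2}. \<mu> x) \<le> (SUP x\<in>{x. f x = y'}. \<mu> x)"
proof (rule ccontr)
  let ?T = "(SUP x\<in>{x. f x = y'}. \<mu> x)"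
  assume "\<not> ?thesis"
  hence l1: "?T < (SUP x\<in>{x. f x = y1}. \<mu> x)" and l2: "?T < (SUP x\<in>{x. f x = y2}. \<mu> x)" by auto
  have ne1: "{x. f x = y1} \<noteq> {}" using s by (metis (mono_tags) empty_Collect_eq surj_def)
  have ne2: "{x. f x = y2} \<noteq> {}" using s by (metis (mono_tags) empty_Collect_eq surj_def)
  have bdd: "\<And>y. bdd_above (\<mu> ` {x. f x = y})" using bd by (intro bdd_aboveI[of _ 1]) auto
  obtain x1 where x1: "f x1 = y1" "?T < \<mu> x1" using l1 less_cSUP_iff[OF ne1 bdd] by auto
  obtain x2 where x2: "f x2 = y2" "?T < \<mu> x2" using l2 less_cSUP_iff[OF ne2 bdd] by auto
  have "min (\<mu> x1) (\<mu> x2) \<le> \<mu> (g x1 x2)" "g x1 x2 \<in> {x. f x = y'}" using h x1 x2 by auto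
  moreover have "\<mu> (g x1 x2) \<le> ?T" using cSUP_upper[OF _ bdd] calculation(2) by blast
  ultimately show False using x1 x2 by linarith
qed

theorem theorem6p2:
  fixes sc1 :: "'k::field \<Rightarrow> 'v::ab_group_add \<Rightarrow> 'v"
    and br1 :: "'v \<Rightarrow> 'v \<Rightarrow> 'v" and \<alpha>1 :: "'v \<Rightarrow> 'v"
    and sc2 :: "'k \<Rightarrow> 'w::ab_group_add \<Rightarrow> 'w"
    and br2 :: "'w \<Rightarrow> 'w \<Rightarrow> 'w" and \<alpha>2 :: "'w \<Rightarrow> 'w"
    and f :: "'v \<Rightarrow> 'w" and \<mu> :: "'v \<Rightarrow> real"
  assumes "hom_lie_algebra sc1 br1 \<alpha>1"
    and "hom_lie_algebra sc2 br2 \<alpha>2"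
    and "hom_lie_morphism sc1 br1 \<alpha>1 sc2 br2 \<alpha>2 f"
    and "surj f"
    and "fuzzy_hom_lie_subalgebra sc1 br1 \<alpha>1 \<mu>"
  shows "fuzzy_hom_lie_subalgebra sc2 br2 \<alpha>2 (fuzzy_image f \<mu>)"
proof -
  note s = assms(4)
  have bd: "\<And>x. 0 \<le> \<mu> x \<and> \<mu> x \<le> 1" and add: "\<And>x y. \<mu> (x + y) \<ge> min (\<mu> x) (\<mu> y)"
    and sc: "\<And>c x. \<mu> (sc1 c x) \<ge> \<mu> x" and br: "\<And>x y. \<mu> (br1 x y) \<ge> min (\<mu> x) (\<mu> y)"
    and al: "\<And>x. \<mu> (\<alpha>1 x) \<ge> \<mu> x"
    using assms(5) unfolding fuzzy_hom_lie_subalgebra_def by auto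
  have lin: "Vector_Spaces.linear sc1 sc2 f" and fbr: "\<And>x y. f (br1 x y) = br2 (f x) (f y)"
    and fal: "\<And>x. f (\<alpha>1 x) = \<alpha>2 (f x)"
    using assms(3) unfolding hom_lie_morphism_def by (auto simp: fun_eq_iff)
  have fadd: "\<And>x y. f (x + y) = f x + f y" and fsc: "\<And>c x. f (sc1 c x) = sc2 c (f x)"
    using lin unfolding Vector_Spaces.linear_iff by auto
  have img: "\<And>y. fuzzy_image f \<mu> y = (SUP x\<in>{x. f x = y}. \<mu> x)"
    using s unfolding fuzzy_image_def by auto
  have bdd: "\<And>y. bdd_above (\<mu> ` {x. f x = y})" using bd by (intro bdd_aboveI[of _ 1]) auto
  have ne: "\<And>y. {x. f x = y} \<noteq> {}" using s by (metis (mono_tags) empty_Collect_eq surj_def)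
  have r1: "0 \<le> fuzzy_image f \<mu> y \<and> fuzzy_image f \<mu> y \<le> 1" for y
  proof
    obtain x where x: "f x = y" using s by (metis surj_def)
    have "\<mu> x \<le> (SUP x\<in>{x. f x = y}. \<mu> x)" using cSUP_upper[OF _ bdd] x by blast
    then show "0 \<le> fuzzy_image f \<mu> y" using bd[of x] img[of y] by linarith
    show "fuzzy_image f \<mu> y \<le> 1" unfolding img using bd by (intro cSUP_least[OF ne]) auto
  qed
  have r2: "min (fuzzy_image f \<mu> x) (fuzzy_image f \<mu> y) \<le> fuzzy_image f \<mu> (x + y)" for x y
    unfolding img by (rule img_le2[OF bd s, where g="\<lambda>a b. a + b"]) (use add fadd in auto)
  have r3: "fuzzy_image f \<mu> x \<le> fuzzy_image f \<mu> (sc2 c x)" for c x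
    unfolding img by (rule img_le1[OF bd s, where g="sc1 c"]) (use sc fsc in auto)
  have r4: "min (fuzzy_image f \<mu> x) (fuzzy_image f \<mu> y) \<le> fuzzy_image f \<mu> (br2 x y)" for x y
    unfolding img by (rule img_le2[OF bd s, where g="br1"]) (use br fbr in auto)
  have r5: "fuzzy_image f \<mu> x \<le> fuzzy_image f \<mu> (\<alpha>2 x)" for x
    unfolding img by (rule img_le1[OF bd s, where g="\<alpha>1"]) (use al fal in auto)
  show ?thesis unfolding fuzzy_hom_lie_subalgebra_def using r1 r2 r3 r4 r5 by auto
qed

end
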